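(* Let $0<q<1$ and let $s_1,\dots,s_m$ be positive integers with $s_1>1$. Then \[ \sum_{k=1}^m \zeta[s_1,\dots,s_{k-1},1+s_k,s_{k+1},\dots,s_m] = \sum_{k=1}^m \sum_{j=0}^{s_k-2}\zeta[s_1,\dots,s_{k-1},s_k-j,j+1,s_{k+1},\dots,s_m], \] where the inner sum on the right is zero if $s_k<2$.
   Context: Fix $0<q<1$. For real $x$, $[x]_q := (1-q^x)/(1-q)$. For positive integers $s_1,\dots,s_N$ with $s_1>1$, $\zeta[s_1,\dots,s_N] := \sum_{k_1>\cdots>k_N>0}\prod_{j=1}^N q^{(s_j-1)k_j}/[k_j]_q^{s_j}$ (sum over positive integers). *)

theory Defs
  imports "HOL-Analysis.Analysis"
begin

definition qint :: "real \<Rightarrow> real \<Rightarrow> real" where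
  "qint q x = (1 - q powr x) / (1 - q)"

definition mzv_idx :: "nat \<Rightarrow> nat list set" where
  "mzv_idx N = {ks. length ks = N \<and> sorted_wrt (>) ks \<and> (\<forall>k\<in>set ks. 0 < k)}"

definition qzeta :: "real \<Rightarrow> nat list \<Rightarrow> real" where
  "qzeta q s = (\<Sum>\<^sub>\<infinity> ks \<in> mzv_idx (length s).
      \<Prod>j<length s. q ^ ((s!j - 1) * ks!j) / (qint q (real (ks!j))) ^ (s!j))"

end

theory Submission
  imports Defs "HOL-Real_Asymp.Real_Asymp"
begin

definition Q :: "real \<Rightarrow> nat \<Rightarrow> real" where "Q q n = (1 - q^n) / (1 - q)"
definition ff :: "real \<Rightarrow> nat \<Rightarrow> nat \<Rightarrow> real" where "ff q a k = q^((a-1)*k) / (Q q k)^a"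
definition ww :: "real \<Rightarrow> nat \<Rightarrow> real" where "ww q k = q^k / Q q k"

fun Z :: "real \<Rightarrow> nat list \<Rightarrow> nat \<Rightarrow> real" where
  "Z q [] N = 1"
| "Z q (a#s) N = (\<Sum>k\<in>{1..<N}. ff q a k * Z q s k)"

definition LH :: "real \<Rightarrow> nat list \<Rightarrow> nat \<Rightarrow> real" where
  "LH q s N = (\<Sum>k<length s. Z q (s[k := 1 + s!k]) N)"
definition RH :: "real \<Rightarrow> nat list \<Rightarrow> nat \<Rightarrow> real" where
  "RH q s N = (\<Sum>k<length s. \<Sum>j<s!k - 1. Z q (take k s @ [s!k - j, j + 1] @ drop (Suc k) s) N)"

definition AA :: "real \<Rightarrow> nat \<Rightarrow> nat \<Rightarrow> real" where
  "AA q N c = (\<Sum>z\<in>{Suc c..<N}. (1 / Q q (z - c) - 1 / Q q z))"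
definition KK :: "real \<Rightarrow> nat \<Rightarrow> nat \<Rightarrow> real" where
  "KK q N x = (\<Sum>c\<in>{1..<Suc x}. ww q (N - c))"
definition BB :: "real \<Rightarrow> nat \<Rightarrow> nat \<Rightarrow> real" where
  "BB q x y = (\<Sum>c\<in>{Suc y..<x}. ww q (x - c))"

lemma swap3: "(\<Sum>i\<in>A. \<Sum>j\<in>B i. \<Sum>k\<in>C. h i j k) = (\<Sum>k\<in>C. \<Sum>i\<in>A. \<Sum>j\<in>B i. h i j k)"
proof -
  have "(\<Sum>i\<in>A. \<Sum>j\<in>B i. \<Sum>k\<in>C. h i j k) = (\<Sum>i\<in>A. \<Sum>k\<in>C. \<Sum>j\<in>B i. h i j k)"
    by (rule sum.cong[OF refl], rule sum.swap)
  also have "\<dots> = (\<Sum>k\<in>C. \<Sum>i\<in>A. \<Sum>j\<in>B i. h i j k)" by (rule sum.swap)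
  finally show ?thesis .
qed

lemma LH_Cons: "LH q (a#s) N = Z q ((1+a)#s) N + (\<Sum>x\<in>{1..<N}. ff q a x * LH q s x)"
  unfolding LH_def
  apply (simp add: sum.lessThan_Suc_shift sum_distrib_left del: sum.lessThan_Suc)
  apply (rule sum.swap)
  done

lemma RH_Cons: "RH q (a#s) N = (\<Sum>j<a-1. Z q ((a-j)#(j+1)#s) N) + (\<Sum>x\<in>{1..<N}. ff q a x * RH q s x)"
  unfolding RH_def
  apply (simp add: sum.lessThan_Suc_shift sum_distrib_left del: sum.lessThan_Suc)
  apply (rule swap3)
  done

lemma tri_swap: "(\<Sum>x\<in>{1..<N}. \<Sum>c\<in>{1..<x}. h x c) = (\<Sum>c\<in>{1..<N}. \<Sum>x\<in>{Suc c..<N}. h x (c::nat))"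
proof -
  have "(\<Sum>x\<in>{1..<N}. \<Sum>c\<in>{1..<x}. h x c) = (\<Sum>x\<in>{1..<N}. \<Sum>c\<in>{c\<in>{1..<N}. c < x}. h x c)"
    by (rule sum.cong) (auto intro!: sum.cong)
  also have "\<dots> = (\<Sum>c\<in>{1..<N}. \<Sum>x\<in>{x\<in>{1..<N}. c < x}. h x c)"
    by (rule sum.swap_restrict) auto
  also have "\<dots> = (\<Sum>c\<in>{1..<N}. \<Sum>x\<in>{Suc c..<N}. h x (c::nat))"
    by (rule sum.cong) (auto intro!: sum.cong)
  finally show ?thesis .
qed

lemma core_uv:
  fixes uu vv qq :: real
  assumes "1 - uu \<noteq> 0" "1 - vv \<noteq> 0" "1 - uu * vv \<noteq> 0" "1 - qq \<noteq> 0" "uu \<noteq> 0" "vv \<noteq> 0"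
  shows "(uu / ((1-uu)/(1-qq)) - (uu * vv) / ((1-uu * vv)/(1-qq))) * (1 / ((1-vv)/(1-qq)) - 1 / ((1-uu * vv)/(1-qq)))
     = (uu * vv) / ((1-uu * vv)/(1-qq)) / ((1-uu * vv)/(1-qq))"
proof -
  have h1: "uu / ((1-uu)/(1-qq)) - (uu * vv) / ((1-uu * vv)/(1-qq)) = uu*(1-qq)*(1-vv)/((1-uu)*(1-uu * vv))"
  proof -
    have "uu / ((1-uu)/(1-qq)) - (uu * vv) / ((1-uu * vv)/(1-qq)) = (uu*(1-qq)) / (1-uu) - (uu * vv*(1-qq)) / (1-uu * vv)"
      by simp
    also have "\<dots> = ((uu*(1-qq)) * (1-uu * vv) - (uu * vv*(1-qq)) * (1-uu)) / ((1-uu) * (1-uu * vv))"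
      by (rule diff_frac_eq) (use assms in auto)
    also have "(uu*(1-qq)) * (1-uu * vv) - (uu * vv*(1-qq)) * (1-uu) = uu*(1-qq)*(1-vv)"
      by (simp add: algebra_simps)
    finally show ?thesis .
  qed
  have h2: "1 / ((1-vv)/(1-qq)) - 1 / ((1-uu * vv)/(1-qq)) = (1-qq) * vv*(1-uu)/((1-vv)*(1-uu * vv))"
  proof -
    have "1 / ((1-vv)/(1-qq)) - 1 / ((1-uu * vv)/(1-qq)) = (1-qq) / (1-vv) - (1-qq) / (1-uu * vv)"
      by simp
    also have "\<dots> = ((1-qq) * (1-uu * vv) - (1-qq) * (1-vv)) / ((1-vv) * (1-uu * vv))"
      by (rule diff_frac_eq) (use assms in auto)
    also have "(1-qq) * (1-uu * vv) - (1-qq) * (1-vv) = (1-qq) * vv*(1-uu)"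
      by (simp add: algebra_simps)
    finally show ?thesis .
  qed
  have r: "(uu * vv) / ((1-uu * vv)/(1-qq)) / ((1-uu * vv)/(1-qq)) = uu * vv * (1-qq) * (1-qq) / ((1-uu * vv)*(1-uu * vv))"
    by simp
  have nz: "(1-uu)*(1-uu * vv) * ((1-vv)*(1-uu * vv)) \<noteq> 0" "(1-uu * vv)*(1-uu * vv) \<noteq> 0" using assms by auto
  show ?thesis unfolding h1 h2 r times_divide_times_eq frac_eq_eq[OF nz] by algebra
qed

lemma base_uv:
  fixes uu vv qq :: real
  assumes "1 - uu \<noteq> 0" "1 - vv \<noteq> 0" "1 - uu * vv \<noteq> 0" "1 - qq \<noteq> 0" "uu \<noteq> 0" "vv \<noteq> 0"
  shows "(1 / ((1-uu)/(1-qq))) * (1 / ((1-vv)/(1-qq)) - 1 / ((1-uu * vv)/(1-qq))) = (1 / ((1-uu * vv)/(1-qq))) * (vv / ((1-vv)/(1-qq)))"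
proof -
  have h2: "1 / ((1-vv)/(1-qq)) - 1 / ((1-uu * vv)/(1-qq)) = (1-qq) * vv*(1-uu)/((1-vv)*(1-uu * vv))"
  proof -
    have "1 / ((1-vv)/(1-qq)) - 1 / ((1-uu * vv)/(1-qq)) = (1-qq) / (1-vv) - (1-qq) / (1-uu * vv)"
      by simp
    also have "\<dots> = ((1-qq) * (1-uu * vv) - (1-qq) * (1-vv)) / ((1-vv) * (1-uu * vv))"
      by (rule diff_frac_eq) (use assms in auto)
    also have "(1-qq) * (1-uu * vv) - (1-qq) * (1-vv) = (1-qq) * vv*(1-uu)"
      by (simp add: algebra_simps)
    finally show ?thesis .
  qed
  have r: "(1 / ((1-uu)/(1-qq))) * ((1-qq) * vv*(1-uu)/((1-vv)*(1-uu * vv))) = ((1-qq)*((1-qq) * vv*(1-uu))) / ((1-uu)*((1-vv)*(1-uu * vv)))"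
    by simp
  have r2: "(1 / ((1-uu * vv)/(1-qq))) * (vv / ((1-vv)/(1-qq))) = ((1-qq)*(vv*(1-qq))) / ((1-uu * vv)*(1-vv))" by simp
  have nz: "(1-uu)*((1-vv)*(1-uu * vv)) \<noteq> 0" "(1-uu * vv)*(1-vv) \<noteq> 0" using assms by auto
  show ?thesis unfolding h2 r r2 frac_eq_eq[OF nz] by algebra
qed

context fixes q :: real assumes q0: "0 < q" and q1: "q < 1"
begin

lemma Q_ge1: "k \<ge> 1 \<Longrightarrow> Q q k \<ge> 1"
proof -
  assume k: "k \<ge> 1"
  have "q^k \<le> q^1" using k q0 q1 by (intro power_decreasing) auto
  then show ?thesis using q1 by (simp add: Q_def field_simps)
qed

lemma Q_pos: "k \<ge> 1 \<Longrightarrow> Q q k > 0" using Q_ge1 by fastforce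

lemma qpow_le1: "q^k \<le> 1" using q0 q1 by (simp add: power_le_one)

lemma ff_nonneg: "ff q a k \<ge> 0"
  using q0 q1 qpow_le1[of k] by (simp add: ff_def Q_def)

lemma ff_le1: "k \<ge> 1 \<Longrightarrow> ff q a k \<le> 1"
proof -
  assume k: "k \<ge> 1"
  have "q^((a-1)*k) \<le> 1" by (rule qpow_le1)
  moreover have "1 \<le> (Q q k)^a" using Q_ge1[OF k] by (simp add: one_le_power)
  ultimately show ?thesis unfolding ff_def by (simp add: divide_le_eq_1)
qed

lemma ww_nonneg: "ww q k \<ge> 0"
  using q0 q1 qpow_le1[of k] by (simp add: ww_def Q_def)

lemma ww_le: "k \<ge> 1 \<Longrightarrow> ww q k \<le> q^k"
proof -
  assume k: "k \<ge> 1"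
  have "q^k / Q q k \<le> q^k / 1" using Q_ge1[OF k] q0
    by (intro divide_left_mono) auto
  then show ?thesis by (simp add: ww_def)
qed

lemma inv_Q: "e \<ge> 1 \<Longrightarrow> 1 / Q q e = (1 - q) + ww q e"
proof -
  assume e: "e \<ge> 1"
  have "q^e < 1" using q0 q1 e by (simp add: power_less_one_iff)
  then show ?thesis using q1 by (simp add: Q_def ww_def field_simps)
qed

lemma ff_Suc: "a \<ge> 1 \<Longrightarrow> ff q (Suc a) k = ww q k * ff q a k"
proof -
  assume a: "a \<ge> 1"
  have ak: "a*k = k + (a-1)*k" using a by (cases a) auto
  have e: "q ^ (a*k) = q^k * q^((a-1)*k)" unfolding ak by (rule power_add)
  have "ff q (Suc a) k = (q^k * q^((a-1)*k)) / (Q q k * Q q k ^ a)" unfolding ff_def by (simp only: e diff_Suc_1 power_Suc)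
  also have "\<dots> = ww q k * ff q a k" unfolding ff_def ww_def by (rule times_divide_times_eq[symmetric])
  finally show ?thesis .
qed

lemma uv_facts: assumes "1 \<le> c" "c < x"
  shows "q^x = q^c * q^(x-c)" "0 < q^c" "q^c < 1" "0 < q^(x-c)" "q^(x-c) < 1" "q^c * q^(x-c) < 1"
proof -
  show "q^x = q^c * q^(x-c)" using assms by (simp flip: power_add)
  show u: "0 < q^c" "q^c < 1" using assms q0 q1 power_strict_decreasing[of 0 c q] by auto
  show v: "0 < q^(x-c)" "q^(x-c) < 1" using assms q0 q1 power_strict_decreasing[of 0 "x-c" q] by auto
  have "q^c * q^(x-c) < 1 * 1" using u v by (intro mult_strict_mono) auto
  then show "q^c * q^(x-c) < 1" by simp
qed

lemma core: assumes "1 \<le> c" "c < x"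
  shows "(ww q c - ww q x) * (1 / Q q (x - c) - 1 / Q q x) = ww q x / Q q x"
proof -
  note F = uv_facts[OF assms]
  have "1 - q^c \<noteq> 0" "1 - q^(x-c) \<noteq> 0" "1 - q^c* q^(x-c) \<noteq> 0" "1 - q \<noteq> 0" "q^c \<noteq> 0" "q^(x-c) \<noteq> 0"
    using F(2-6) q1 by linarith+
  note B = core_uv[OF this]
  show ?thesis
    apply (unfold ww_def Q_def F(1))
    apply (rule B)
    done
qed

lemma base_ident: assumes "1 \<le> c" "c < x"
  shows "(1 / Q q c) * (1 / Q q (x - c) - 1 / Q q x) = (1 / Q q x) * ww q (x - c)"
proof -
  note F = uv_facts[OF assms]
  have "1 - q^c \<noteq> 0" "1 - q^(x-c) \<noteq> 0" "1 - q^c* q^(x-c) \<noteq> 0" "1 - q \<noteq> 0" "q^c \<noteq> 0" "q^(x-c) \<noteq> 0"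
    using F(2-6) q1 by linarith+
  note B = base_uv[OF this]
  show ?thesis
    apply (unfold ww_def Q_def F(1))
    apply (rule B)
    done
qed

lemma ff1: "ff q (Suc 0) k = 1 / Q q k" by (simp add: ff_def)

lemma ring_gen: "(a::real)*(cc*d - e*f) + ((b - a)*d)*cc = (b*cc)*d - (a*e)*f"
  by (simp add: algebra_simps)

lemma g_ident: assumes "1 \<le> c" "c < x"
  shows "(\<Sum>j<m. ff q (Suc m - j) x * ff q (j+1) c) = ff q (Suc m) c * (1 / Q q (x - c) - 1 / Q q x) - ff q (Suc m) x * ww q (x - c)"
proof (induction m)
  case 0
  show ?case using base_ident[OF assms] by (simp only: ff1 lessThan_0 sum.empty)
next
  case (Suc m)
  have s1: "(\<Sum>j<Suc m. ff q (Suc (Suc m) - j) x * ff q (j+1) c)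
      = (\<Sum>j<m. ff q (Suc (Suc m) - j) x * ff q (j+1) c) + ff q (Suc (Suc m) - m) x * ff q (m+1) c"
    by (rule sum.lessThan_Suc)
  have s2: "ff q (Suc (Suc m) - j) x = ww q x * ff q (Suc m - j) x" if "j < m" for j
  proof -
    have "Suc (Suc m) - j = Suc (Suc m - j)" using that by (simp add: Suc_diff_le)
    moreover have "Suc m - j \<ge> 1" using that by simp
    ultimately show ?thesis using ff_Suc by simp
  qed
  have s3: "Suc (Suc m) - m = 2" by simp
  have "(\<Sum>j<Suc m. ff q (Suc (Suc m) - j) x * ff q (j+1) c)
      = (\<Sum>j<m. ww q x * (ff q (Suc m - j) x * ff q (j+1) c)) + ff q 2 x * ff q (Suc m) c"
    unfolding s1 s3 by (simp add: s2 mult.assoc)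
  also have "\<dots> = ww q x * (ff q (Suc m) c * (1 / Q q (x - c) - 1 / Q q x) - ff q (Suc m) x * ww q (x - c)) + ff q 2 x * ff q (Suc m) c"
    by (simp only: sum_distrib_left[symmetric] Suc.IH)
  also have "\<dots> = ff q (Suc (Suc m)) c * (1 / Q q (x - c) - 1 / Q q x) - ff q (Suc (Suc m)) x * ww q (x - c)"
  proof -
    have f2: "ff q 2 x = ww q x * ff q (Suc 0) x" using ff_Suc[of 1 x] by (simp add: numeral_2_eq_2)
    have e1: "ff q (Suc (Suc m)) c = ww q c * ff q (Suc m) c" by (rule ff_Suc) simp
    have e2: "ff q (Suc (Suc m)) x = ww q x * ff q (Suc m) x" by (rule ff_Suc) simp
    have e3: "ff q 2 x = (ww q c - ww q x) * (1 / Q q (x - c) - 1 / Q q x)" unfolding f2 ff1 using core[OF assms] by simp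
    show ?thesis unfolding e1 e2 e3 by (rule ring_gen)
  qed
  finally show ?case .
qed

end

lemma rev_sum: "n \<le> N \<Longrightarrow> (\<Sum>c\<in>{1..<Suc n}. g (N - c)) = (\<Sum>e\<in>{N-n..<N}. g (e::nat))"
  by (rule sum.reindex_bij_witness[where i="\<lambda>e. N - e" and j="\<lambda>c. N - c"]) auto

context fixes q :: real assumes q0: "0 < q" and q1: "q < 1"
begin

lemma L1_aux: assumes "Suc x \<le> N" "1 \<le> x"
  shows "(\<Sum>e\<in>{N-x..<N}. ww q e) = ww q x - AA q N x + (\<Sum>e\<in>{1..<x}. ww q e)"
  using assms(1)
proof (induction N rule: dec_induct)
  case base
  have "(\<Sum>e\<in>{1..<Suc x}. ww q e) = (\<Sum>e\<in>{1..<x}. ww q e) + ww q x"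
    using assms(2) by (rule sum.atLeastLessThan_Suc)
  then show ?case by (simp add: AA_def)
next
  case (step n)
  have h1: "(\<Sum>e\<in>{n-x..<Suc n}. ww q e) = (\<Sum>e\<in>{n-x..<n}. ww q e) + ww q n"
    by (rule sum.atLeastLessThan_Suc) simp
  have h2: "(\<Sum>e\<in>{n-x..<Suc n}. ww q e) = ww q (n-x) + (\<Sum>e\<in>{Suc (n-x)..<Suc n}. ww q e)"
    by (rule sum.atLeast_Suc_lessThan) simp
  have h3: "Suc n - x = Suc (n - x)" using step.hyps by (simp add: Suc_diff_le)
  have h4: "AA q (Suc n) x = AA q n x + (1 / Q q (n - x) - 1 / Q q n)"
    unfolding AA_def using step.hyps by (subst sum.atLeastLessThan_Suc) auto
  have h5: "1 / Q q (n - x) - 1 / Q q n = ww q (n-x) - ww q n"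
    using inv_Q[OF q0 q1, of "n-x"] inv_Q[OF q0 q1, of n] step.hyps assms(2) by simp
  show ?case using h1 h2 h3 h4 h5 step.IH by simp
qed

lemma L1: assumes "1 \<le> x" "x < N"
  shows "KK q N x = ww q x - AA q N x + BB q x 0"
proof -
  have "KK q N x = (\<Sum>e\<in>{N-x..<N}. ww q e)" unfolding KK_def using assms by (intro rev_sum) simp
  moreover have "BB q x 0 = (\<Sum>e\<in>{1..<x}. ww q e)"
  proof -
    have "BB q x 0 = (\<Sum>c\<in>{1..<Suc (x-1)}. ww q (x - c))" unfolding BB_def using assms by simp
    also have "\<dots> = (\<Sum>e\<in>{x-(x-1)..<x}. ww q e)" by (rule rev_sum) simp
    finally show ?thesis using assms by simp
  qed
  ultimately show ?thesis using L1_aux[of x N] assms by simp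
qed

lemma BB_split: assumes "1 \<le> y" "y < x"
  shows "BB q x y + KK q x y = BB q x 0"
proof -
  have "KK q x y + BB q x y = (\<Sum>c\<in>{1..<x}. ww q (x - c))"
    unfolding KK_def BB_def using assms by (intro sum.atLeastLessThan_concat) auto
  then show ?thesis unfolding BB_def by simp
qed

lemma RH1: assumes "1 \<le> a"
  shows "(\<Sum>j<a-1. Z q ((a-j)#(j+1)#s) N)
    = (\<Sum>c\<in>{1..<N}. ff q a c * Z q s c * AA q N c) - (\<Sum>x\<in>{1..<N}. ff q a x * (\<Sum>c\<in>{1..<x}. ww q (x-c) * Z q s c))"
proof -
  obtain m where a: "a = Suc m" using assms by (cases a) auto
  have "(\<Sum>j<a-1. Z q ((a-j)#(j+1)#s) N) = (\<Sum>j<m. \<Sum>x\<in>{1..<N}. \<Sum>c\<in>{1..<x}. ff q (Suc m - j) x * ff q (j+1) c * Z q s c)"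
    unfolding a by (simp add: sum_distrib_left mult.assoc)
  also have "\<dots> = (\<Sum>x\<in>{1..<N}. \<Sum>j<m. \<Sum>c\<in>{1..<x}. ff q (Suc m - j) x * ff q (j+1) c * Z q s c)"
    by (rule sum.swap)
  also have "\<dots> = (\<Sum>x\<in>{1..<N}. \<Sum>c\<in>{1..<x}. (\<Sum>j<m. ff q (Suc m - j) x * ff q (j+1) c) * Z q s c)"
    by (rule sum.cong[OF refl]) (simp add: sum.swap[of _ "{..<m}"] sum_distrib_right)
  also have "\<dots> = (\<Sum>x\<in>{1..<N}. \<Sum>c\<in>{1..<x}. (ff q a c * (1 / Q q (x - c) - 1 / Q q x) - ff q a x * ww q (x - c)) * Z q s c)"
    unfolding a by (intro sum.cong refl, subst g_ident[OF q0 q1]) auto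
  also have "\<dots> = (\<Sum>x\<in>{1..<N}. \<Sum>c\<in>{1..<x}. ff q a c * Z q s c * (1 / Q q (x - c) - 1 / Q q x))
                 - (\<Sum>x\<in>{1..<N}. ff q a x * (\<Sum>c\<in>{1..<x}. ww q (x-c) * Z q s c))"
    by (simp add: sum_subtractf sum_distrib_left algebra_simps sum.distrib)
  also have "(\<Sum>x\<in>{1..<N}. \<Sum>c\<in>{1..<x}. ff q a c * Z q s c * (1 / Q q (x - c) - 1 / Q q x))
      = (\<Sum>c\<in>{1..<N}. ff q a c * Z q s c * AA q N c)"
    unfolding tri_swap AA_def by (simp add: sum_distrib_left)
  finally show ?thesis .
qed

lemma step_lemma: assumes a: "1 \<le> a"
  and M: "\<And>x. x \<in> {1..<N} \<Longrightarrow> (\<Sum>c\<in>{1..<x}. ww q (x-c) * Z q s c) + (LH q s x - RH q s x) = Z q s x * BB q x 0"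
  shows "LH q (a#s) N - RH q (a#s) N = (\<Sum>x\<in>{1..<N}. ff q a x * Z q s x * KK q N x)"
proof -
  have Zs: "Z q ((1+a)#s) N = (\<Sum>x\<in>{1..<N}. ww q x * ff q a x * Z q s x)"
    using ff_Suc[OF q0 q1 a] by simp
  have "LH q (a#s) N - RH q (a#s) N =
     (\<Sum>x\<in>{1..<N}. ww q x * ff q a x * Z q s x) - (\<Sum>c\<in>{1..<N}. ff q a c * Z q s c * AA q N c)
     + (\<Sum>x\<in>{1..<N}. ff q a x * (\<Sum>c\<in>{1..<x}. ww q (x-c) * Z q s c))
     + ((\<Sum>x\<in>{1..<N}. ff q a x * LH q s x) - (\<Sum>x\<in>{1..<N}. ff q a x * RH q s x))"
    unfolding LH_Cons RH_Cons RH1[OF a] Zs by simp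
  also have "\<dots> = (\<Sum>x\<in>{1..<N}. ff q a x * (ww q x * Z q s x - Z q s x * AA q N x
       + ((\<Sum>c\<in>{1..<x}. ww q (x-c) * Z q s c) + (LH q s x - RH q s x))))"
    by (simp add: sum.distrib sum_subtractf algebra_simps)
  also have "\<dots> = (\<Sum>x\<in>{1..<N}. ff q a x * (ww q x * Z q s x - Z q s x * AA q N x + Z q s x * BB q x 0))"
    by (intro sum.cong refl) (simp only: M)
  also have "\<dots> = (\<Sum>x\<in>{1..<N}. ff q a x * Z q s x * KK q N x)"
    by (intro sum.cong refl) (simp add: L1 algebra_simps)
  finally show ?thesis .
qed

lemma D_formula: "\<forall>x\<in>set s. 0 < x \<Longrightarrow> 1 \<le> a \<Longrightarrow>
   LH q (a#s) N - RH q (a#s) N = (\<Sum>x\<in>{1..<N}. ff q a x * Z q s x * KK q N x)"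
proof (induction s arbitrary: a N)
  case Nil
  show ?case
    by (rule step_lemma[OF Nil(2)]) (simp add: LH_def RH_def BB_def)
next
  case (Cons b s)
  have b: "1 \<le> b" using Cons.prems by auto
  have IH: "LH q (b#s) x - RH q (b#s) x = (\<Sum>y\<in>{1..<x}. ff q b y * Z q s y * KK q x y)" for x
    using Cons.IH[of b x] Cons.prems b by auto
  show ?case
  proof (rule step_lemma[OF Cons.prems(2)])
    fix x assume x: "x \<in> {1..<N}"
    have "(\<Sum>c\<in>{1..<x}. ww q (x-c) * Z q (b#s) c) = (\<Sum>c\<in>{1..<x}. \<Sum>y\<in>{1..<c}. ww q (x-c) * (ff q b y * Z q s y))"
      by (simp add: sum_distrib_left)
    also have "\<dots> = (\<Sum>y\<in>{1..<x}. \<Sum>c\<in>{Suc y..<x}. ww q (x-c) * (ff q b y * Z q s y))"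
      by (rule tri_swap)
    also have "\<dots> = (\<Sum>y\<in>{1..<x}. ff q b y * Z q s y * BB q x y)"
      unfolding BB_def by (simp add: sum_distrib_left sum_distrib_right mult_ac)
    finally have e1: "(\<Sum>c\<in>{1..<x}. ww q (x-c) * Z q (b#s) c) = (\<Sum>y\<in>{1..<x}. ff q b y * Z q s y * BB q x y)" .
    have "(\<Sum>c\<in>{1..<x}. ww q (x-c) * Z q (b#s) c) + (LH q (b#s) x - RH q (b#s) x)
        = (\<Sum>y\<in>{1..<x}. ff q b y * Z q s y * (BB q x y + KK q x y))"
      unfolding e1 IH by (simp add: sum.distrib algebra_simps)
    also have "\<dots> = (\<Sum>y\<in>{1..<x}. ff q b y * Z q s y * BB q x 0)"
      by (intro sum.cong refl) (simp add: BB_split)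
    also have "\<dots> = Z q (b#s) x * BB q x 0" by (simp add: sum_distrib_right)
    finally show "(\<Sum>c\<in>{1..<x}. ww q (x-c) * Z q (b#s) c) + (LH q (b#s) x - RH q (b#s) x) = Z q (b#s) x * BB q x 0" .
  qed
qed

end

definition Pr :: "real \<Rightarrow> nat list \<Rightarrow> nat list \<Rightarrow> real" where
  "Pr q t ks = (\<Prod>j<length t. ff q (t!j) (ks!j))"

definition TT :: "nat list \<Rightarrow> nat \<Rightarrow> nat list set" where
  "TT t N = {ks\<in>mzv_idx (length t). \<forall>k\<in>set ks. k < N}"

lemma TT_Nil: "TT [] N = {[]}"
  by (auto simp: TT_def mzv_idx_def)

lemma TT_Cons: "TT (a#t) N = (\<Union>k\<in>{1..<N}. (\<lambda>ks. k#ks) ` TT t k)"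
proof (intro equalityI subsetI)
  fix ks assume "ks \<in> TT (a#t) N"
  then obtain k ks' where ks: "ks = k#ks'" by (cases ks) (auto simp: TT_def mzv_idx_def)
  from \<open>ks \<in> TT (a#t) N\<close> show "ks \<in> (\<Union>k\<in>{1..<N}. (\<lambda>ks. k#ks) ` TT t k)"
    unfolding ks by (auto simp: TT_def mzv_idx_def)
next
  fix ks assume "ks \<in> (\<Union>k\<in>{1..<N}. (\<lambda>ks. k#ks) ` TT t k)"
  then show "ks \<in> TT (a#t) N" apply (auto simp: TT_def mzv_idx_def) using less_trans by blast
qed

lemma TT_finite: "finite (TT t N)"
proof -
  have "TT t N \<subseteq> {ks. set ks \<subseteq> {..<N} \<and> length ks = length t}"
    by (auto simp: TT_def mzv_idx_def)
  moreover have "finite {ks. set ks \<subseteq> {..<N} \<and> length ks = length t}"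
    by (rule finite_lists_length_eq) simp
  ultimately show ?thesis by (rule finite_subset)
qed

lemma Pr_Cons: "Pr q (a#t) (k#ks) = ff q a k * Pr q t ks"
  unfolding Pr_def by (simp add: prod.lessThan_Suc_shift del: prod.lessThan_Suc)

lemma Z_eq: "Z q t N = sum (Pr q t) (TT t N)"
proof (induction t arbitrary: N)
  case Nil
  then show ?case by (simp add: TT_Nil Pr_def)
next
  case (Cons a t)
  have "sum (Pr q (a#t)) (TT (a#t) N) = (\<Sum>k\<in>{1..<N}. sum (Pr q (a#t)) ((\<lambda>ks. k#ks) ` TT t k))"
    unfolding TT_Cons by (rule sum.UNION_disjoint) (auto simp: TT_finite)
  also have "\<dots> = (\<Sum>k\<in>{1..<N}. \<Sum>ks\<in>TT t k. ff q a k * Pr q t ks)"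
    by (rule sum.cong[OF refl], subst sum.reindex) (auto simp: inj_on_def Pr_Cons)
  also have "\<dots> = Z q (a#t) N" by (simp add: Cons.IH sum_distrib_left)
  finally show ?case by simp
qed

lemma TT_mono: "N \<le> M \<Longrightarrow> TT t N \<subseteq> TT t M"
  by (auto simp: TT_def)

lemma TT_sub: "TT t N \<subseteq> mzv_idx (length t)"
  by (auto simp: TT_def)

lemma pg_lim: "0 < (r::real) \<Longrightarrow> r < 1 \<Longrightarrow> (\<lambda>n. real n ^ m * r ^ n) \<longlonglongrightarrow> 0"
  by real_asymp

context fixes q :: real assumes q0: "0 < q" and q1: "q < 1"
begin

lemma qzeta_Pr: "qzeta q t = infsum (Pr q t) (mzv_idx (length t))"
  unfolding qzeta_def Pr_def
  by (intro infsum_cong prod.cong refl) (simp add: ff_def qint_def Q_def powr_realpow q0)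

lemma Pr_nonneg: "Pr q t ks \<ge> 0"
  unfolding Pr_def by (intro prod_nonneg) (simp add: ff_nonneg[OF q0 q1])

lemma Z_le_pow: "Z q t k \<le> real k ^ length t"
proof (induction t arbitrary: k)
  case Nil
  then show ?case by simp
next
  case (Cons b t)
  have "Z q (b#t) k = (\<Sum>y\<in>{1..<k}. ff q b y * Z q t y)" by simp
  also have "\<dots> \<le> (\<Sum>y\<in>{1..<k}. real k ^ length t)"
  proof (rule sum_mono)
    fix y assume y: "y \<in> {1..<k}"
    have "Z q t y \<ge> 0" using Z_eq[of q t y] Pr_nonneg by (simp add: sum_nonneg)
    have "ff q b y * Z q t y \<le> 1 * Z q t y"
      using ff_le1[OF q0 q1, of y b] \<open>Z q t y \<ge> 0\<close> y by (intro mult_right_mono) auto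
    also have "\<dots> \<le> real y ^ length t" using Cons.IH[of y] by simp
    also have "\<dots> \<le> real k ^ length t" using y by (intro power_mono) auto
    finally show "ff q b y * Z q t y \<le> real k ^ length t" .
  qed
  also have "\<dots> \<le> real k * real k ^ length t" by (simp add: mult_right_mono)
  finally show ?case by simp
qed

lemma Z_nonneg: "Z q t k \<ge> 0"
  using Z_eq[of q t k] Pr_nonneg by (simp add: sum_nonneg)

lemma ff_le_q: "2 \<le> a \<Longrightarrow> 1 \<le> k \<Longrightarrow> ff q a k \<le> q ^ k"
proof -
  assume a: "2 \<le> a" and k: "1 \<le> k"
  have "ff q a k \<le> q^((a-1)*k) / 1"
    unfolding ff_def using Q_ge1[OF q0 q1 k] q0
    by (intro divide_left_mono) (auto simp: one_le_power)
  also have "\<dots> \<le> q^k"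
  proof -
    have "1 * k \<le> (a-1) * k" using a by (intro mult_le_mono1) auto
    then have "q^((a-1)*k) \<le> q^k" by (intro power_decreasing) (use q0 q1 in auto)
    then show ?thesis by simp
  qed
  finally show ?thesis .
qed

lemma summable_poly_geom: "summable (\<lambda>n. real n ^ m * q ^ n)"
proof -
  define r where "r = sqrt q"
  have r: "0 < r" "r < 1" using q0 q1 by (auto simp: r_def)
  have qr: "q ^ n = r ^ n * r ^ n" for n using q0 by (simp add: r_def power_mult_distrib[symmetric])
  have lim: "(\<lambda>n. real n ^ m * r ^ n) \<longlonglongrightarrow> 0" using r pg_lim by blast
  have ev: "eventually (\<lambda>n. real n ^ m * r ^ n < 1) sequentially"
    using order_tendstoD(2)[OF lim] by simp
  show ?thesis
  proof (rule summable_comparison_test_ev[OF _ summable_geometric])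
    show "norm r < 1" using r by simp
    show "eventually (\<lambda>n. norm (real n ^ m * q ^ n) \<le> r ^ n) sequentially"
      using ev
    proof eventually_elim
      case (elim n)
      have "norm (real n ^ m * q ^ n) = (real n ^ m * r ^ n) * r ^ n" using q0 r by (simp add: qr mult_ac abs_mult)
      also have "\<dots> \<le> 1 * r ^ n" using elim r by (intro mult_right_mono) auto
      finally show ?case by simp
    qed
  qed
qed

lemma Z_bound: assumes "2 \<le> a"
  shows "Z q (a#t) N \<le> suminf (\<lambda>n. real n ^ length t * q ^ n)"
proof -
  have "Z q (a#t) N \<le> (\<Sum>k\<in>{1..<N}. real k ^ length t * q ^ k)"
    unfolding Z.simps
  proof (rule sum_mono)
    fix k assume k: "k \<in> {1..<N}"
    have "ff q a k * Z q t k \<le> q^k * real k ^ length t"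
      using ff_le_q[OF assms, of k] k Z_le_pow[of t k] Z_nonneg[of t k] ff_nonneg[OF q0 q1, of a k]
      by (intro mult_mono) auto
    then show "ff q a k * Z q t k \<le> real k ^ length t * q ^ k" by (simp add: mult.commute)
  qed
  also have "\<dots> \<le> suminf (\<lambda>n. real n ^ length t * q ^ n)"
    using summable_poly_geom q0 by (intro sum_le_suminf) auto
  finally show ?thesis .
qed

lemma qzeta_lim: assumes "t \<noteq> []" "t!0 \<ge> 2"
  shows "(\<lambda>N. Z q t N) \<longlonglongrightarrow> qzeta q t"
proof -
  obtain a t' where t: "t = a#t'" using assms by (cases t) auto
  have a: "2 \<le> a" using assms t by simp
  define A where "A = mzv_idx (length t)"
  define B where "B = suminf (\<lambda>n. real n ^ length t' * q ^ n)"
  have fin_bound: "\<exists>N. F \<subseteq> TT t N" if "finite F" "F \<subseteq> A" for F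
  proof -
    define M where "M = Max (insert 0 (\<Union>ks\<in>F. set ks))"
    have "finite (\<Union>ks\<in>F. set ks)" using that by auto
    then have "\<forall>ks\<in>F. \<forall>k\<in>set ks. k < Suc M" unfolding M_def
      by (auto simp: less_Suc_eq_le intro!: Max_ge)
    then show ?thesis using that unfolding A_def TT_def by (intro exI[of _ "Suc M"]) auto
  qed
  have summ: "Pr q t summable_on A"
  proof (rule nonneg_bdd_above_summable_on)
    show "\<And>x. x \<in> A \<Longrightarrow> 0 \<le> Pr q t x" by (rule Pr_nonneg)
    show "bdd_above (sum (Pr q t) ` {F. F \<subseteq> A \<and> finite F})"
    proof (rule bdd_aboveI)
      fix y assume "y \<in> sum (Pr q t) ` {F. F \<subseteq> A \<and> finite F}"
      then obtain F where F: "F \<subseteq> A" "finite F" "y = sum (Pr q t) F" by auto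
      obtain N where N: "F \<subseteq> TT t N" using fin_bound F by blast
      have "y \<le> sum (Pr q t) (TT t N)" unfolding F(3)
        by (rule sum_mono2[OF TT_finite N]) (simp add: Pr_nonneg)
      also have "\<dots> = Z q t N" by (simp add: Z_eq)
      also have "\<dots> \<le> B" unfolding B_def t by (rule Z_bound[OF a])
      finally show "y \<le> B" .
    qed
  qed
  then have hs: "(Pr q t has_sum qzeta q t) A" unfolding qzeta_Pr A_def by (simp add: summable_iff_has_sum_infsum)
  then have lim1: "(sum (Pr q t) \<longlongrightarrow> qzeta q t) (finite_subsets_at_top A)" by (simp add: has_sum_def)
  have lim2: "filterlim (TT t) (finite_subsets_at_top A) sequentially"
    unfolding filterlim_finite_subsets_at_top
  proof (intro allI impI)
    fix X assume X: "finite X \<and> X \<subseteq> A"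
    then obtain N where N: "X \<subseteq> TT t N" using fin_bound by blast
    show "\<forall>\<^sub>F y in sequentially. finite (TT t y) \<and> X \<subseteq> TT t y \<and> TT t y \<subseteq> A"
      using eventually_ge_at_top[of N]
    proof eventually_elim
      case (elim y)
      then show ?case using N TT_mono[OF elim, of t] TT_sub[of t y] TT_finite[of t y] by (auto simp: A_def)
    qed
  qed
  have "((\<lambda>N. sum (Pr q t) (TT t N)) \<longlongrightarrow> qzeta q t) sequentially"
    using tendsto_compose_filtermap lim1 lim2 filterlim_compose[OF lim1 lim2] by (simp add: o_def)
  then show ?thesis by (simp add: Z_eq)
qed

end

context fixes q :: real assumes q0: "0 < q" and q1: "q < 1"
begin

lemma KK_le: assumes "1 \<le> x" "x < N" shows "KK q N x \<le> real x * q^(N-x)"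
proof -
  have "KK q N x \<le> real (card {1..<Suc x}) * q^(N-x)"
    unfolding KK_def
  proof (rule sum_bounded_above)
    fix c assume c: "c \<in> {1..<Suc x}"
    have "ww q (N - c) \<le> q^(N-c)" using c assms by (intro ww_le[OF q0 q1]) auto
    also have "\<dots> \<le> q^(N-x)" using c assms q0 q1 by (intro power_decreasing) auto
    finally show "ww q (N - c) \<le> q^(N-x)" .
  qed
  then show ?thesis by simp
qed

lemma KK_nonneg: "KK q N x \<ge> 0"
  unfolding KK_def by (intro sum_nonneg) (simp add: ww_nonneg[OF q0 q1])

lemma err_lim: assumes a: "2 \<le> a"
  shows "(\<lambda>N. \<Sum>x\<in>{1..<N}. ff q a x * Z q s x * KK q N x) \<longlonglongrightarrow> 0"
proof (rule tendsto_sandwich[where f="\<lambda>N. 0" and h="\<lambda>N. real N ^ (length s + 2) * q ^ N"])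
  show "\<forall>\<^sub>F N in sequentially. 0 \<le> (\<Sum>x\<in>{1..<N}. ff q a x * Z q s x * KK q N x)"
    by (intro always_eventually allI sum_nonneg mult_nonneg_nonneg ff_nonneg[OF q0 q1] Z_nonneg[OF q0 q1] KK_nonneg)
  show "(\<lambda>N. 0) \<longlonglongrightarrow> (0::real)" by simp
  show "(\<lambda>N. real N ^ (length s + 2) * q ^ N) \<longlonglongrightarrow> 0" using q0 q1 by (rule pg_lim)
  show "\<forall>\<^sub>F N in sequentially. (\<Sum>x\<in>{1..<N}. ff q a x * Z q s x * KK q N x) \<le> real N ^ (length s + 2) * q ^ N"
  proof (intro always_eventually allI)
    fix N
    have "(\<Sum>x\<in>{1..<N}. ff q a x * Z q s x * KK q N x) \<le> real (card {1..<N}) * (real N ^ (length s + 1) * q ^ N)"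
    proof (rule sum_bounded_above)
      fix x assume x: "x \<in> {1..<N}"
      have "ff q a x * Z q s x * KK q N x \<le> q^x * real N ^ length s * (real N * q^(N-x))"
      proof (intro mult_mono)
        show "ff q a x \<le> q^x" using x by (intro ff_le_q[OF q0 q1 a]) auto
        show "Z q s x \<le> real N ^ length s"
          using Z_le_pow[OF q0 q1, of s x] x by (meson atLeastLessThan_iff less_imp_le of_nat_0_le_iff of_nat_le_iff order.trans power_mono)
        show "KK q N x \<le> real N * q^(N-x)"
          using KK_le[of x N] x q0 by (meson atLeastLessThan_iff less_imp_le mult_right_mono of_nat_le_iff order.trans zero_le_power less_imp_le)
      qed (use q0 ff_nonneg[OF q0 q1] Z_nonneg[OF q0 q1] KK_nonneg in auto)
      also have "\<dots> = real N ^ (length s + 1) * (q^x * q^(N-x))" by (simp add: mult_ac)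
      also have "q^x * q^(N-x) = q^N" using x by (simp flip: power_add)
      finally show "ff q a x * Z q s x * KK q N x \<le> real N ^ (length s + 1) * q ^ N" .
    qed
    also have "\<dots> \<le> real N * (real N ^ (length s + 1) * q ^ N)"
      using q0 by (intro mult_right_mono) auto
    also have "\<dots> = real N ^ (length s + 2) * q ^ N" by simp
    finally show "(\<Sum>x\<in>{1..<N}. ff q a x * Z q s x * KK q N x) \<le> real N ^ (length s + 2) * q ^ N" .
  qed
qed

end

theorem corollary4p3:
  fixes q :: real and s :: "nat list"
  assumes "0 < q" "q < 1"
    and "s \<noteq> []" "\<forall>x\<in>set s. 0 < x" "s!0 > 1"
  shows "(\<Sum>k<length s. qzeta q (s[k := 1 + s!k]))
       = (\<Sum>k<length s. \<Sum>j<s!k - 1.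
            qzeta q (take k s @ [s!k - j, j + 1] @ drop (Suc k) s))"
proof -
  note q0 = assms(1) and q1 = assms(2)
  obtain a s' where s: "s = a#s'" using assms(3) by (cases s) auto
  have a: "2 \<le> a" using assms(5) s by simp
  have pos': "\<forall>x\<in>set s'. 0 < x" using assms(4) s by simp
  have limL: "(\<lambda>N. LH q s N) \<longlonglongrightarrow> (\<Sum>k<length s. qzeta q (s[k := 1 + s!k]))"
    unfolding LH_def
  proof (intro tendsto_sum qzeta_lim[OF q0 q1])
    fix k assume k: "k \<in> {..<length s}"
    show "s[k := 1 + s!k] \<noteq> []" using assms(3) by simp
    show "2 \<le> s[k := 1 + s!k] ! 0" using k assms(3,5) by (cases k) (auto simp: nth_list_update)
  qed
  have limR: "(\<lambda>N. RH q s N) \<longlonglongrightarrow> (\<Sum>k<length s. \<Sum>j<s!k - 1.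
            qzeta q (take k s @ [s!k - j, j + 1] @ drop (Suc k) s))"
    unfolding RH_def
  proof (intro tendsto_sum qzeta_lim[OF q0 q1])
    fix k j assume k: "k \<in> {..<length s}" and j: "j \<in> {..<s!k - 1}"
    show "take k s @ [s!k - j, j + 1] @ drop (Suc k) s \<noteq> []" by simp
    show "2 \<le> (take k s @ [s!k - j, j + 1] @ drop (Suc k) s) ! 0"
    proof (cases k)
      case 0
      then show ?thesis using j by simp
    next
      case (Suc k')
      then show ?thesis using k assms(3,5) by (simp add: nth_append s)
    qed
  qed
  have D: "LH q s N - RH q s N = (\<Sum>x\<in>{1..<N}. ff q a x * Z q s' x * KK q N x)" for N
    unfolding s using a by (intro D_formula[OF q0 q1 pos']) simp
  have "(\<lambda>N. LH q s N - RH q s N) \<longlonglongrightarrow> 0"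
    unfolding D by (rule err_lim[OF q0 q1 a])
  moreover have "(\<lambda>N. LH q s N - RH q s N) \<longlonglongrightarrow> (\<Sum>k<length s. qzeta q (s[k := 1 + s!k])) - (\<Sum>k<length s. \<Sum>j<s!k - 1.
            qzeta q (take k s @ [s!k - j, j + 1] @ drop (Suc k) s))"
    by (intro tendsto_diff limL limR)
  ultimately show ?thesis using LIMSEQ_unique by fastforce
qed

end
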